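(* Let $u_0,\dots,u_{n-2}$ be unitaries on $(\mathbb{C}^2)^{\otimes n}$ with $u_t$ acting on qubits $t,t+1$. Define propagators $U_{t_2:t_1}=u_{t_2-1}\cdots u_{t_1}$ if $t_2>t_1$, $U_{t:t}=\mathbb{1}$, and $U_{t_2:t_1}=u_{t_2}^\dagger\cdots u_{t_1-1}^\dagger$ if $t_2<t_1$. For a strictly increasing tuple $\mathbf t=(t_1<\dots<t_M)$ in $\{0,\dots,n-1\}$ let $U_{\mathbf t:0}=U_{t_1:0}U_{t_2:0}\cdots U_{t_M:0}$. Then for any two such tuples $\mathbf t,\mathbf t'$ of the same length $M$, $$U_{\mathbf t:0}=V\,U_{\mathbf s:0},\qquad U_{\mathbf t':0}=W\,U_{\mathbf s:0},$$ where $\mathbf s=(\max(t_1,t'_1),\dots,\max(t_M,t'_M))$ and $$V=\prod_{j:\,t_j<t'_j}U_{t_j:t'_j},\qquad W=\prod_{j:\,t_j>t'_j}U_{t'_j:t_j},$$ with the products ordered from small $j$ on the right to large $j$ on the left. *)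

theory Defs
  imports "Jordan_Normal_Form.Schur_Decomposition"
begin

text \<open>Operators on (C^2)^{tensor n} are complex 2^n x 2^n matrices; qubit 0 is the
leftmost tensor factor (most significant bit of the basis index).\<close>

definition kron :: "complex mat \<Rightarrow> complex mat \<Rightarrow> complex mat" where
  "kron A B = mat (dim_row A * dim_row B) (dim_col A * dim_col B)
     (\<lambda>(i,j). A $$ (i div dim_row B, j div dim_col B) * B $$ (i mod dim_row B, j mod dim_col B))"

definition unitary_mat :: "nat \<Rightarrow> complex mat \<Rightarrow> bool" where
  "unitary_mat N A \<longleftrightarrow> A \<in> carrier_mat N N \<and> A * mat_adjoint A = 1\<^sub>m N \<and> mat_adjoint A * A = 1\<^sub>m N"

definition acts_on_qubits :: "nat \<Rightarrow> nat \<Rightarrow> complex mat \<Rightarrow> bool" where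
  "acts_on_qubits n t u \<longleftrightarrow>
     (\<exists>g \<in> carrier_mat 4 4. u = kron (1\<^sub>m (2^t)) (kron g (1\<^sub>m (2^(n - t - 2)))))"

definition prodm :: "nat \<Rightarrow> complex mat list \<Rightarrow> complex mat" where
  "prodm N As = foldr (*) As (1\<^sub>m N)"

definition propag :: "nat \<Rightarrow> (nat \<Rightarrow> complex mat) \<Rightarrow> nat \<Rightarrow> nat \<Rightarrow> complex mat" where
  "propag N u t2 t1 =
     (if t1 < t2 then prodm N (rev (map u [t1..<t2]))
      else if t2 = t1 then 1\<^sub>m N
      else prodm N (map (\<lambda>k. mat_adjoint (u k)) [t2..<t1]))"

definition prop_tuple :: "nat \<Rightarrow> (nat \<Rightarrow> complex mat) \<Rightarrow> nat list \<Rightarrow> complex mat" where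
  "prop_tuple N u ts = prodm N (map (\<lambda>k. propag N u k 0) ts)"

end

theory Submission
  imports Defs
begin

lemma kron_dims[simp]: "dim_row (kron A B) = dim_row A * dim_row B" "dim_col (kron A B) = dim_col A * dim_col B"
  by (simp_all add: kron_def)

lemma kron_index[simp]: "i < dim_row A * dim_row B \<Longrightarrow> j < dim_col A * dim_col B \<Longrightarrow>
  kron A B $$ (i,j) = A $$ (i div dim_row B, j div dim_col B) * B $$ (i mod dim_row B, j mod dim_col B)"
  by (simp add: kron_def)

lemma kron_carrier: "A \<in> carrier_mat a b \<Longrightarrow> B \<in> carrier_mat c d \<Longrightarrow> kron A B \<in> carrier_mat (a*c) (b*d)"
  by auto

lemma sum_split_prod: "(\<Sum>l<b*d. h l) = (\<Sum>x<b. \<Sum>y<d. h (x*d+y)) " for h :: "nat \<Rightarrow> 'a::comm_monoid_add"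
proof (induction b)
  case 0 then show ?case by simp
next
  case (Suc b)
  have "{..<Suc b * d} = {..<b*d} \<union> {b*d..<b*d+d}" by auto
  then have "(\<Sum>l<Suc b*d. h l) = (\<Sum>l<b*d. h l) + (\<Sum>l\<in>{b*d..<b*d+d}. h l)"
    by (simp add: sum.union_disjoint ivl_disj_int)
  also have "(\<Sum>l\<in>{b*d..<b*d+d}. h l) = (\<Sum>y<d. h (b*d+y))"
    by (rule sum.reindex_bij_witness[of _ "\<lambda>y. b*d+y" "\<lambda>l. l - b*d"]) auto
  finally show ?case using Suc by simp
qed

lemma kron_mult:
  assumes A: "A \<in> carrier_mat a b" and B: "B \<in> carrier_mat c d" and C: "C \<in> carrier_mat b e"
    and D: "D \<in> carrier_mat d f" and d: "d > 0"
  shows "kron A B * kron C D = kron (A*C) (B*D)"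
proof (rule eq_matI)
  fix i j assume i: "i < dim_row (kron (A*C) (B*D))" and j: "j < dim_col (kron (A*C) (B*D))"
  have i': "i < a*c" and j': "j < e*f" using i j A B C D by auto
  have c0: "c > 0" and f0: "f > 0" using i' j' by (auto intro: ccontr)
  have ic: "i div c < a" "i mod c < c" using i' c0 by (auto simp: less_mult_imp_div_less)
  have jf: "j div f < e" "j mod f < f" using j' f0 by (auto simp: less_mult_imp_div_less)
  have "(kron A B * kron C D) $$ (i,j) = (\<Sum>l<b*d. kron A B $$ (i,l) * kron C D $$ (l,j))"
    using A B C D i' j' by (simp add: scalar_prod_def row_def col_def lessThan_atLeast0)
  also have "\<dots> = (\<Sum>x<b. \<Sum>y<d. kron A B $$ (i,x*d+y) * kron C D $$ (x*d+y,j))"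
    by (rule sum_split_prod)
  also have "\<dots> = (\<Sum>x<b. \<Sum>y<d. (A $$ (i div c, x) * C $$ (x, j div f)) * (B $$ (i mod c, y) * D $$ (y, j mod f)))"
  proof (intro sum.cong refl)
    fix x y assume x: "x \<in> {..<b}" and y: "y \<in> {..<d}"
    have "x*d + y < (x+1)*d" using y by simp
    also have "(x+1)*d \<le> b*d" using x by (intro mult_le_mono1) auto
    finally have xy: "x*d+y < b*d" .
    show "kron A B $$ (i,x*d+y) * kron C D $$ (x*d+y,j) = (A $$ (i div c, x) * C $$ (x, j div f)) * (B $$ (i mod c, y) * D $$ (y, j mod f))"
      using A B C D i' j' xy y by (simp add: algebra_simps)
  qed
  also have "\<dots> = (\<Sum>x<b. A $$ (i div c, x) * C $$ (x, j div f)) * (\<Sum>y<d. B $$ (i mod c, y) * D $$ (y, j mod f))"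
    by (simp add: sum_product)
  also have "\<dots> = kron (A*C) (B*D) $$ (i,j)"
    using A B C D i' j' ic jf by (simp add: scalar_prod_def row_def col_def lessThan_atLeast0)
  finally show "(kron A B * kron C D) $$ (i,j) = kron (A*C) (B*D) $$ (i,j)" .
qed (use A B C D in auto)

lemma kron_assoc:
  assumes "dim_row B > 0" "dim_row C > 0" "dim_col B > 0" "dim_col C > 0"
  shows "kron A (kron B C) = kron (kron A B) C"
proof (rule eq_matI)
  fix i j assume i: "i < dim_row (kron (kron A B) C)" and j: "j < dim_col (kron (kron A B) C)"
  let ?rB = "dim_row B" and ?rC = "dim_row C" and ?cB = "dim_col B" and ?cC = "dim_col C"
  have i': "i < dim_row A * (?rB * ?rC)" and j': "j < dim_col A * (?cB * ?cC)" using i j by (auto simp: ac_simps)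
  have i2: "i div ?rC < dim_row A * ?rB" using i' assms
    by (simp add: less_mult_imp_div_less ac_simps)
  have j2: "j div ?cC < dim_col A * ?cB" using j' assms
    by (simp add: less_mult_imp_div_less ac_simps)
  have e1: "i div (?rB * ?rC) = i div ?rC div ?rB" "j div (?cB * ?cC) = j div ?cC div ?cB"
    by (metis div_mult2_eq mult.commute)+
  have "i mod (?rB * ?rC) = ?rC * (i div ?rC mod ?rB) + i mod ?rC" "j mod (?cB * ?cC) = ?cC * (j div ?cC mod ?cB) + j mod ?cC"
    by (metis mod_mult2_eq mult.commute)+
  then have e2: "i mod (?rB * ?rC) div ?rC = i div ?rC mod ?rB" "j mod (?cB * ?cC) div ?cC = j div ?cC mod ?cB"
    using assms by simp_all
  have e3: "i mod (?rB * ?rC) mod ?rC = i mod ?rC" "j mod (?cB * ?cC) mod ?cC = j mod ?cC"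
    by (simp_all add: mod_mod_cancel)
  have m1: "i mod (?rB * ?rC) < ?rB * ?rC" "j mod (?cB * ?cC) < ?cB * ?cC" using assms by auto
  show "kron A (kron B C) $$ (i,j) = kron (kron A B) C $$ (i,j)"
    using i' j' i2 j2 m1 by (simp add: e1 e2 e3 ac_simps)
qed auto

lemma kron_one: "b > 0 \<Longrightarrow> kron (1\<^sub>m a) (1\<^sub>m b) = 1\<^sub>m (a*b)"
proof (rule eq_matI)
  fix i j assume b: "b > 0" and i: "i < dim_row (1\<^sub>m (a*b))" and j: "j < dim_col (1\<^sub>m (a*b))"
  have i2: "i div b < a" "j div b < a" using i j b by (auto simp: less_mult_imp_div_less)
  have "(i = j) = (i div b = j div b \<and> i mod b = j mod b)"
    by (metis div_mult_mod_eq)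
  then show "kron (1\<^sub>m a) (1\<^sub>m b) $$ (i,j) = 1\<^sub>m (a*b) $$ (i,j)"
    using i j i2 b by auto
qed auto

lemma gates_commute:
  assumes g: "g \<in> carrier_mat 4 4" and h: "h \<in> carrier_mat 4 4" and kl: "k+2 \<le> l" and ln: "l+2 \<le> n"
  shows "kron (1\<^sub>m (2^k)) (kron g (1\<^sub>m (2^(n-k-2)))) * kron (1\<^sub>m (2^l)) (kron h (1\<^sub>m (2^(n-l-2))))
       = kron (1\<^sub>m (2^l)) (kron h (1\<^sub>m (2^(n-l-2)))) * kron (1\<^sub>m (2^k)) (kron g (1\<^sub>m (2^(n-k-2))))"
proof -
  define r where "r = l - k - 2"
  define q where "q = (2::nat)^(n-k-2)"
  define q' where "q' = (2::nat)^(n-l-2)"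
  define W where "W = kron h (1\<^sub>m q')"
  define Z where "Z = kron (1\<^sub>m (2^r)) W"
  define G where "G = kron g (1\<^sub>m q)"
  have e1: "n-k-2 = r + 2 + (n-l-2)" unfolding r_def using kl ln by simp
  have qq: "q = 2^r * (4 * q')" unfolding q_def q'_def e1 by (simp add: power_add)
  have e2: "l = k + 2 + r" unfolding r_def using kl by simp
  have ll: "(2::nat)^l = 2^k * 4 * 2^r" unfolding e2 by (simp add: power_add)
  have W: "W \<in> carrier_mat (4*q') (4*q')" unfolding W_def using h by auto
  have Z: "Z \<in> carrier_mat q q" unfolding Z_def qq using W by auto
  have G: "G \<in> carrier_mat (4*q) (4*q)" unfolding G_def using g by auto
  have q'0: "q' > 0" and q0: "q > 0" by (auto simp: q_def q'_def)
  have Y: "kron (1\<^sub>m (2^l)) W = kron (1\<^sub>m (2^k)) (kron (1\<^sub>m 4) Z)"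
  proof -
    have "kron (1\<^sub>m (2^k)) (kron (1\<^sub>m 4) Z) = kron (kron (1\<^sub>m (2^k)) (1\<^sub>m 4)) Z"
      using Z q0 by (intro kron_assoc) auto
    also have "\<dots> = kron (1\<^sub>m (2^k*4)) (kron (1\<^sub>m (2^r)) W)" by (simp add: kron_one Z_def)
    also have "\<dots> = kron (kron (1\<^sub>m (2^k*4)) (1\<^sub>m (2^r))) W"
      using W q'0 by (intro kron_assoc) auto
    also have "\<dots> = kron (1\<^sub>m (2^l)) W" by (simp add: kron_one ll)
    finally show ?thesis by simp
  qed
  have "G * kron (1\<^sub>m 4) Z = kron (g * 1\<^sub>m 4) (1\<^sub>m q * Z)"
    unfolding G_def using g Z q0 by (intro kron_mult) auto
  also have "\<dots> = kron g Z" using g Z by simp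
  finally have c1: "G * kron (1\<^sub>m 4) Z = kron g Z" .
  have "kron (1\<^sub>m 4) Z * G = kron (1\<^sub>m 4 * g) (Z * 1\<^sub>m q)"
    unfolding G_def using g Z q0 by (intro kron_mult) auto
  also have "\<dots> = kron g Z" using g Z by simp
  finally have c2: "kron (1\<^sub>m 4) Z * G = kron g Z" .
  have q4: "0 < 4*q" using q0 by simp
  have KZ: "kron (1\<^sub>m 4) Z \<in> carrier_mat (4*q) (4*q)" using Z by auto
  have "kron (1\<^sub>m (2^k)) G * kron (1\<^sub>m (2^k)) (kron (1\<^sub>m 4) Z) = kron (1\<^sub>m (2^k) * 1\<^sub>m (2^k)) (G * kron (1\<^sub>m 4) Z)"
    using G KZ q4 by (intro kron_mult[of _ "2^k" "2^k" _ "4*q" "4*q" _ "2^k" _ "4*q"]) auto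
  also have "\<dots> = kron (1\<^sub>m (2^k) * 1\<^sub>m (2^k)) (kron (1\<^sub>m 4) Z * G)" by (simp add: c1 c2)
  also have "\<dots> = kron (1\<^sub>m (2^k)) (kron (1\<^sub>m 4) Z) * kron (1\<^sub>m (2^k)) G"
    using G KZ q4 by (intro kron_mult[of _ "2^k" "2^k" _ "4*q" "4*q" _ "2^k" _ "4*q", symmetric]) auto
  finally show ?thesis unfolding G_def[symmetric] q_def[symmetric] q'_def[symmetric] W_def[symmetric] Y .
qed

lemma adj_carrier: "A \<in> carrier_mat N N \<Longrightarrow> mat_adjoint A \<in> carrier_mat N N"
  by (auto simp: mat_adjoint_def)

lemma prodm_carrier: "set As \<subseteq> carrier_mat N N \<Longrightarrow> prodm N As \<in> carrier_mat N N"
  by (induction As) (auto simp: prodm_def)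

lemma prodm_append: "set As \<subseteq> carrier_mat N N \<Longrightarrow> set Bs \<subseteq> carrier_mat N N \<Longrightarrow>
   prodm N (As@Bs) = prodm N As * prodm N Bs"
proof (induction As)
  case Nil
  then show ?case using prodm_carrier[of Bs N] by (simp add: prodm_def)
next
  case (Cons A As)
  then have "prodm N (As@Bs) = prodm N As * prodm N Bs" by simp
  moreover have "prodm N (A#As) = A * prodm N As" "prodm N ((A#As)@Bs) = A * prodm N (As@Bs)" by (simp_all add: prodm_def)
  ultimately show ?case using Cons.prems prodm_carrier[of As N] prodm_carrier[of Bs N]
    by (simp add: assoc_mult_mat[of A N N _ N _ N])
qed

lemma prodm_single: "A \<in> carrier_mat N N \<Longrightarrow> prodm N [A] = A"
  by (simp add: prodm_def)

lemma prodm_comm: "A \<in> carrier_mat N N \<Longrightarrow> set Bs \<subseteq> carrier_mat N N \<Longrightarrow> (\<forall>B\<in>set Bs. A*B = B*A) \<Longrightarrow>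
   A * prodm N Bs = prodm N Bs * A"
proof (induction Bs)
  case Nil
  then show ?case by (simp add: prodm_def)
next
  case (Cons B Bs)
  have PB: "prodm N Bs \<in> carrier_mat N N" using Cons.prems prodm_carrier[of Bs N] by simp
  have B: "B \<in> carrier_mat N N" and A: "A \<in> carrier_mat N N" using Cons.prems by auto
  have ih: "A * prodm N Bs = prodm N Bs * A" using Cons by simp
  have ab: "A * B = B * A" using Cons.prems by simp
  have "A * prodm N (B#Bs) = A * (B * prodm N Bs)" by (simp add: prodm_def)
  also have "\<dots> = (A * B) * prodm N Bs" using A B PB by (simp add: assoc_mult_mat)
  also have "\<dots> = B * (A * prodm N Bs)" using A B PB ab by (simp add: assoc_mult_mat)
  also have "\<dots> = (B * prodm N Bs) * A" using A B PB ih by (simp add: assoc_mult_mat)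
  finally show ?case by (simp add: prodm_def)
qed

lemma map2_max_comm: "length xs = length ys \<Longrightarrow> map2 max ys xs = map2 max xs (ys::nat list)"
  by (simp add: list_eq_iff_nth_eq max.commute)

locale gates =
  fixes n :: nat and u :: "nat \<Rightarrow> complex mat"
  assumes unit: "\<And>k. k < n - 1 \<Longrightarrow> unitary_mat (2^n) (u k)"
    and local: "\<And>k. k < n - 1 \<Longrightarrow> acts_on_qubits n k (u k)"
begin

lemma uc: "k < n - 1 \<Longrightarrow> u k \<in> carrier_mat (2^n) (2^n)"
  using unit by (simp add: unitary_mat_def)

lemma comm: assumes "k + 2 \<le> l" "l < n - 1" shows "u k * u l = u l * u k"
proof -
  obtain g where g: "g \<in> carrier_mat 4 4" "u k = kron (1\<^sub>m (2^k)) (kron g (1\<^sub>m (2^(n-k-2))))"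
    using local[of k] assms by (auto simp: acts_on_qubits_def)
  obtain h where h: "h \<in> carrier_mat 4 4" "u l = kron (1\<^sub>m (2^l)) (kron h (1\<^sub>m (2^(n-l-2))))"
    using local[of l] assms by (auto simp: acts_on_qubits_def)
  show ?thesis unfolding g(2) h(2) using assms by (intro gates_commute g h) auto
qed

lemma Rcar: "b \<le> n - 1 \<Longrightarrow> prodm (2^n) (rev (map u [a..<b])) \<in> carrier_mat (2^n) (2^n)"
  by (rule prodm_carrier) (auto intro: uc)

lemma P_eq: "propag (2^n) u c 0 = prodm (2^n) (rev (map u [0..<c]))"
  by (simp add: propag_def prodm_def)

lemma propag_car: "x \<le> n - 1 \<Longrightarrow> y \<le> n - 1 \<Longrightarrow> propag (2^n) u x y \<in> carrier_mat (2^n) (2^n)"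
  unfolding propag_def by (auto intro!: prodm_carrier uc adj_carrier)

lemma R_split: assumes "a \<le> b" "b \<le> n - 1"
  shows "prodm (2^n) (rev (map u [0..<b])) = prodm (2^n) (rev (map u [a..<b])) * prodm (2^n) (rev (map u [0..<a]))"
proof -
  have "[0..<b] = [0..<a] @ [a..<b]" using assms
    by (metis le0 le_add_diff_inverse upt_add_eq_append)
  then show ?thesis using assms by (simp, intro prodm_append) (auto intro!: uc)
qed

lemma Q_inv: "\<forall>k\<in>set xs. k < n - 1 \<Longrightarrow>
  prodm (2^n) (map (\<lambda>k. mat_adjoint (u k)) xs) * prodm (2^n) (rev (map u xs)) = 1\<^sub>m (2^n)"
proof (induction xs)
  case Nil
  then show ?case by (simp add: prodm_def)
next
  case (Cons x xs)
  let ?A = "prodm (2^n) (map (\<lambda>k. mat_adjoint (u k)) xs)" and ?B = "prodm (2^n) (rev (map u xs))"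
  have x: "u x \<in> carrier_mat (2^n) (2^n)" "mat_adjoint (u x) \<in> carrier_mat (2^n) (2^n)"
    using uc[of x] Cons.prems by (auto intro: adj_carrier)
  have A: "?A \<in> carrier_mat (2^n) (2^n)" using Cons.prems by (auto intro!: prodm_carrier uc adj_carrier)
  have B: "?B \<in> carrier_mat (2^n) (2^n)" using Cons.prems by (auto intro!: prodm_carrier uc)
  have ih: "?A * ?B = 1\<^sub>m (2^n)" using Cons by simp
  have ux: "mat_adjoint (u x) * u x = 1\<^sub>m (2^n)" using unit[of x] Cons.prems by (simp add: unitary_mat_def)
  have e1: "prodm (2^n) (map (\<lambda>k. mat_adjoint (u k)) (x#xs)) = mat_adjoint (u x) * ?A" by (simp add: prodm_def)
  have "prodm (2^n) (rev (map u xs) @ [u x]) = ?B * prodm (2^n) [u x]"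
    using Cons.prems by (intro prodm_append) (auto intro!: uc)
  then have e2: "prodm (2^n) (rev (map u (x#xs))) = ?B * u x"
    using x by (simp add: prodm_single)
  have "mat_adjoint (u x) * ?A * (?B * u x) = mat_adjoint (u x) * ((?A * ?B) * u x)"
    using x A B by (simp add: assoc_mult_mat[of _ "2^n" "2^n" _ "2^n" _ "2^n"])
  also have "\<dots> = 1\<^sub>m (2^n)" using ih ux x by simp
  finally show ?case using e1 e2 by simp
qed

lemma comm_RP: assumes "c < a" "a \<le> b" "b \<le> n - 1"
  shows "prodm (2^n) (rev (map u [a..<b])) * propag (2^n) u c 0 = propag (2^n) u c 0 * prodm (2^n) (rev (map u [a..<b]))"
proof -
  have Pc: "propag (2^n) u c 0 \<in> carrier_mat (2^n) (2^n)" using assms by (intro propag_car) auto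
  have "u kk * propag (2^n) u c 0 = propag (2^n) u c 0 * u kk" if kk: "a \<le> kk" "kk < b" for kk
    unfolding P_eq using assms kk
      by (intro prodm_comm uc) (auto intro!: uc comm[symmetric])
  then show ?thesis using Pc assms by (intro prodm_comm[symmetric]) (auto intro: uc)
qed


lemma pt_carrier: "\<forall>c\<in>set ts. c \<le> n - 1 \<Longrightarrow> prop_tuple (2^n) u ts \<in> carrier_mat (2^n) (2^n)"
  unfolding prop_tuple_def by (intro prodm_carrier) (auto intro!: propag_car)

lemma pt_snoc: "\<forall>c\<in>set ts. c \<le> n - 1 \<Longrightarrow> c \<le> n - 1 \<Longrightarrow>
   prop_tuple (2^n) u (ts @ [c]) = prop_tuple (2^n) u ts * propag (2^n) u c 0"
proof -
  assume a: "\<forall>c\<in>set ts. c \<le> n - 1" "c \<le> n - 1"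
  have "propag (2^n) u c 0 \<in> carrier_mat (2^n) (2^n)" using a by (intro propag_car) auto
  moreover have "prodm (2^n) (map (\<lambda>k. propag (2^n) u k 0) ts @ [propag (2^n) u c 0]) =
     prodm (2^n) (map (\<lambda>k. propag (2^n) u k 0) ts) * prodm (2^n) [propag (2^n) u c 0]"
    using a by (intro prodm_append) (auto intro!: propag_car)
  ultimately show ?thesis unfolding prop_tuple_def by (simp add: prodm_single)
qed

lemma main: "length t = M \<Longrightarrow> length t' = M \<Longrightarrow> sorted_wrt (<) t \<Longrightarrow> sorted_wrt (<) t' \<Longrightarrow>
  set t \<subseteq> {0..n-1} \<Longrightarrow> set t' \<subseteq> {0..n-1} \<Longrightarrow>
  prop_tuple (2^n) u t =
           prodm (2^n) (rev (map (\<lambda>j. propag (2^n) u (t!j) (t'!j)) (filter (\<lambda>j. t!j < t'!j) [0..<M])))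
           * prop_tuple (2^n) u (map2 max t t')"
proof (induction M arbitrary: t t')
  case 0
  then show ?case by (simp add: prop_tuple_def prodm_def)
next
  case (Suc M)
  obtain t0 a where t: "t = t0@[a]" using Suc.prems(1) by (cases t rule: rev_cases) auto
  obtain t0' b where t': "t' = t0'@[b]" using Suc.prems(2) by (cases t' rule: rev_cases) auto
  have l0: "length t0 = M" "length t0' = M" using Suc.prems t t' by auto
  have s0: "sorted_wrt (<) t0" "sorted_wrt (<) t0'" "\<forall>x\<in>set t0. x < a"
    using Suc.prems(3,4) t t' by (auto simp: sorted_wrt_append)
  have r0: "\<forall>c\<in>set t0. c \<le> n - 1" "\<forall>c\<in>set t0'. c \<le> n - 1" "a \<le> n - 1" "b \<le> n - 1"
    using Suc.prems(5,6) t t' by auto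
  have "x \<le> n-1 \<and> y \<le> n-1" if xy: "(x,y) \<in> set (zip t0 t0')" for x y
    using r0 set_zip_leftD[OF xy] set_zip_rightD[OF xy] by auto
  then have rs: "\<forall>c\<in>set (map2 max t0 t0'). c \<le> n - 1" by (auto simp: max_def)
  have r1: "set t0 \<subseteq> {0..n-1}" "set t0' \<subseteq> {0..n-1}" using Suc.prems(5,6) t t' by auto
  define L0 where "L0 = map (\<lambda>j. propag (2^n) u (t0!j) (t0'!j)) (filter (\<lambda>j. t0!j < t0'!j) [0..<M])"
  define X0 where "X0 = prop_tuple (2^n) u t0"
  define S0 where "S0 = prop_tuple (2^n) u (map2 max t0 t0')"
  define V0 where "V0 = prodm (2^n) (rev L0)"
  have IH: "X0 = V0 * S0" unfolding X0_def V0_def S0_def L0_def using Suc.IH[OF l0 s0(1,2) r1] by auto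
  have L0c: "set (rev L0) \<subseteq> carrier_mat (2^n) (2^n)" unfolding L0_def using r0 l0
    by (auto intro!: propag_car)
  have V0c: "V0 \<in> carrier_mat (2^n) (2^n)" unfolding V0_def using L0c by (rule prodm_carrier)
  have X0c: "X0 \<in> carrier_mat (2^n) (2^n)" unfolding X0_def using r0 by (intro pt_carrier) auto
  have S0c: "S0 \<in> carrier_mat (2^n) (2^n)" unfolding S0_def using rs by (intro pt_carrier) auto
  have Pac: "propag (2^n) u a 0 \<in> carrier_mat (2^n) (2^n)" using r0 by (intro propag_car) auto
  have Pbc: "propag (2^n) u b 0 \<in> carrier_mat (2^n) (2^n)" using r0 by (intro propag_car) auto
  have lst: "map (\<lambda>j. propag (2^n) u (t!j) (t'!j)) (filter (\<lambda>j. t!j < t'!j) [0..<Suc M])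
      = L0 @ (if a < b then [propag (2^n) u a b] else [])"
  proof -
    have "filter (\<lambda>j. t!j < t'!j) [0..<M] = filter (\<lambda>j. t0!j < t0'!j) [0..<M]"
      using l0 by (intro filter_cong) (auto simp: t t' nth_append)
    moreover have "map (\<lambda>j. propag (2^n) u (t!j) (t'!j)) (filter (\<lambda>j. t0!j < t0'!j) [0..<M]) = L0"
      unfolding L0_def using l0 by (intro map_cong) (auto simp: t t' nth_append)
    ultimately show ?thesis using l0 by (simp add: t t' nth_append)
  qed
  have pt: "prop_tuple (2^n) u t = X0 * propag (2^n) u a 0" unfolding t X0_def using r0 by (intro pt_snoc) auto
  have ms: "map2 max t t' = map2 max t0 t0' @ [max a b]" using l0 by (simp add: t t')
  have ps: "prop_tuple (2^n) u (map2 max t t') = S0 * propag (2^n) u (max a b) 0"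
    unfolding ms S0_def using rs r0 by (intro pt_snoc) (auto simp: max_def)
  show ?case
  proof (cases "a < b")
    case False
    then have "max a b = a" by simp
    then show ?thesis unfolding lst pt ps using False IH V0c S0c Pac
      by (simp add: V0_def[symmetric] assoc_mult_mat[of _ "2^n" "2^n" _ "2^n" _ "2^n"])
  next
    case True
    define Q where "Q = propag (2^n) u a b"
    define R where "R = prodm (2^n) (rev (map u [a..<b]))"
    have Rc: "R \<in> carrier_mat (2^n) (2^n)" unfolding R_def using r0 by (intro Rcar) auto
    have Qc: "Q \<in> carrier_mat (2^n) (2^n)" unfolding Q_def using r0 by (intro propag_car) auto
    have PbR: "propag (2^n) u b 0 = R * propag (2^n) u a 0" unfolding R_def P_eq
      using True r0 by (intro R_split) auto
    have QR: "Q * R = 1\<^sub>m (2^n)" unfolding Q_def R_def propag_def using True r0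
      by (simp, intro Q_inv) auto
    have RX: "R * X0 = X0 * R" unfolding X0_def prop_tuple_def R_def using Rc s0(3) r0 True
      by (intro prodm_comm) (auto intro!: propag_car comm_RP simp: R_def)
    have e: "prodm (2^n) (rev (L0 @ [Q])) = Q * V0"
      unfolding V0_def by (simp add: prodm_def)
    have "(Q * V0) * (S0 * propag (2^n) u b 0) = Q * ((V0 * S0) * propag (2^n) u b 0)"
      using Qc V0c S0c Pbc by (simp add: assoc_mult_mat[of _ "2^n" "2^n" _ "2^n" _ "2^n"])
    also have "\<dots> = Q * ((X0 * R) * propag (2^n) u a 0)"
      using IH X0c Rc Pac PbR by (simp add: assoc_mult_mat[of _ "2^n" "2^n" _ "2^n" _ "2^n"])
    also have "(X0 * R) * propag (2^n) u a 0 = R * (X0 * propag (2^n) u a 0)"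
      using RX X0c Rc Pac by (metis assoc_mult_mat)
    also have "Q * (R * (X0 * propag (2^n) u a 0)) = (Q * R) * (X0 * propag (2^n) u a 0)"
      using RX Qc X0c Rc Pac by (simp add: assoc_mult_mat[of _ "2^n" "2^n" _ "2^n" _ "2^n"])
    also have "\<dots> = X0 * propag (2^n) u a 0" using QR X0c Pac by simp
    finally show ?thesis unfolding lst pt ps using True e by (simp add: Q_def[symmetric])
  qed
qed

end

theorem lemmaA1:
  fixes n M :: nat and u :: "nat \<Rightarrow> complex mat" and t t' :: "nat list"
  assumes unit: "\<And>k. k < n - 1 \<Longrightarrow> unitary_mat (2^n) (u k)"
    and local: "\<And>k. k < n - 1 \<Longrightarrow> acts_on_qubits n k (u k)"
    and lt: "length t = M" and lt': "length t' = M"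
    and inc: "sorted_wrt (<) t" and inc': "sorted_wrt (<) t'"
    and rng: "set t \<subseteq> {0..n-1}" and rng': "set t' \<subseteq> {0..n-1}"
  shows "prop_tuple (2^n) u t =
           prodm (2^n) (rev (map (\<lambda>j. propag (2^n) u (t!j) (t'!j)) (filter (\<lambda>j. t!j < t'!j) [0..<M])))
           * prop_tuple (2^n) u (map2 max t t')
       \<and> prop_tuple (2^n) u t' =
           prodm (2^n) (rev (map (\<lambda>j. propag (2^n) u (t'!j) (t!j)) (filter (\<lambda>j. t!j > t'!j) [0..<M])))
           * prop_tuple (2^n) u (map2 max t t')"
proof -
  interpret gates n u using unit local by unfold_locales auto
  show ?thesis
    using main[OF lt lt' inc inc' rng rng'] main[OF lt' lt inc' inc rng' rng] map2_max_comm[of t t'] lt lt'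
    by simp
qed

end
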